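(* Let $\mathcal{X},\mathcal{Y}$ be finite sets, $P_X$ a probability distribution on $\mathcal{X}$, $d:\mathcal{X}\times\mathcal{Y}\to[0,\infty)$, and $z\in(0,1]$. Then the map $Q_Y\mapsto\tilde D(z,Q_Y)$ is convex on the set of probability distributions on $\mathcal{Y}$.
   Context: $p_{c,x,y,u}=Q_Y\{y': d(x,y')<d(x,y)\}+u\cdot Q_Y\{y': d(x,y')=d(x,y)\}$; $\tilde D(z,Q_Y)=z^{-1}\mathbb{E}[d(X,Y)\mathbf{1}\{p_{c,X,Y,U}\le z\}]$ with $X\sim P_X$, $Y\sim Q_Y$, $U$ uniform on $[0,1]$ independent. *)

theory Defs
  imports "HOL-Analysis.Analysis"
begin

definition is_dist :: "('a::finite \<Rightarrow> real) \<Rightarrow> bool" where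
  "is_dist q \<longleftrightarrow> (\<forall>a. q a \<ge> 0) \<and> (\<Sum>a\<in>UNIV. q a) = 1"

definition dist_prob :: "('a::finite \<Rightarrow> real) \<Rightarrow> 'a set \<Rightarrow> real" where
  "dist_prob q A = (\<Sum>a\<in>A. q a)"

definition p_c :: "('x \<Rightarrow> 'y::finite \<Rightarrow> real) \<Rightarrow> ('y \<Rightarrow> real) \<Rightarrow> 'x \<Rightarrow> 'y \<Rightarrow> real \<Rightarrow> real" where
  "p_c d Q x y u = dist_prob Q {y'. d x y' < d x y} + u * dist_prob Q {y'. d x y' = d x y}"

text \<open>\tilde D(z,Q) = z^{-1} E[d(X,Y) 1{p_{c,X,Y,U} \<le> z}], X ~ P, Y ~ Q, U ~ Unif[0,1] independent.
  The expectation over U is the Lebesgue measure of the event within [0,1].\<close>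
definition Dtilde :: "('x::finite \<Rightarrow> real) \<Rightarrow> ('x \<Rightarrow> 'y::finite \<Rightarrow> real) \<Rightarrow> real \<Rightarrow> ('y \<Rightarrow> real) \<Rightarrow> real" where
  "Dtilde P d z Q = inverse z * (\<Sum>x\<in>UNIV. \<Sum>y\<in>UNIV. P x * Q y * d x y *
      measure lborel {u \<in> {0..1}. p_c d Q x y u \<le> z})"

end

theory Submission imports Defs begin

lemma meas_set:
  fixes a b z :: real
  assumes "b \<ge> 0"
  shows "measure lborel {u\<in>{0..1::real}. a + u*b \<le> z} =
    (if b = 0 then (if a \<le> z then 1 else 0) else min 1 (max 0 ((z-a)/b)))"
proof (cases "b = 0")
  case True
  then have "{u\<in>{0..1::real}. a + u*b \<le> z} = (if a \<le> z then {0..1} else {})" by auto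
  then show ?thesis using True by simp
next
  case False
  then have bp: "b > 0" using assms by simp
  have eq: "{u\<in>{0..1::real}. a + u*b \<le> z} = {u\<in>{0..1::real}. u \<le> (z-a)/b}"
    using bp by (auto simp: pos_le_divide_eq algebra_simps)
  show ?thesis
  proof (cases "(z-a)/b < 0")
    case True
    then have "{u\<in>{0..1::real}. a + u*b \<le> z} = {}" using eq by auto
    moreover have "min 1 (max 0 ((z-a)/b)) = 0" using True by simp
    ultimately show ?thesis using False by (simp only: measure_empty if_False)
  next
    case F2: False
    then have "{u\<in>{0..1::real}. u \<le> (z-a)/b} = {0..min 1 ((z-a)/b)}" by auto
    then show ?thesis using eq F2 False by simp
  qed
qed

lemma bm:
  fixes a b z :: real
  assumes "b > 0"
  shows "b * min 1 (max 0 ((z-a)/b)) = min z (a+b) - min z a"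
proof -
  consider "z \<le> a" | "a < z" "z < a + b" | "a + b \<le> z" by linarith
  then show ?thesis
  proof cases
    case 1
    then have "(z-a)/b \<le> 0" using assms by (simp add: divide_nonpos_pos)
    then show ?thesis using 1 assms by simp
  next
    case 2
    then have "(z-a)/b \<ge> 0" "(z-a)/b \<le> 1" using assms by (auto simp: divide_le_eq)
    then show ?thesis using 2 assms by simp
  next
    case 3
    then have "(z-a)/b \<ge> 1" using assms by (simp add: le_divide_eq)
    then show ?thesis using 3 assms by simp
  qed
qed

lemma tele:
  fixes D :: "'y::finite \<Rightarrow> real" and \<phi> :: "real \<Rightarrow> real"
  assumes "finite S"
  shows "(\<Sum>c\<in>S. \<phi> (\<Sum>y\<in>{y. D y \<in> S \<and> D y \<le> c}. Q y) - \<phi> (\<Sum>y\<in>{y. D y \<in> S \<and> D y < c}. Q y))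
     = \<phi> (\<Sum>y\<in>{y. D y \<in> S}. Q y) - \<phi> 0"
  using assms
proof (induction rule: finite_linorder_max_induct)
  case empty
  then show ?case by simp
next
  case (insert b A)
  have bA: "b \<notin> A" using insert.hyps by auto
  have e1: "{y. D y \<in> insert b A \<and> D y \<le> c} = {y. D y \<in> A \<and> D y \<le> c}" if "c \<in> A" for c
    using insert.hyps that by fastforce
  have e2: "{y. D y \<in> insert b A \<and> D y < c} = {y. D y \<in> A \<and> D y < c}" if "c \<in> A" for c
    using insert.hyps that by fastforce
  have e3: "{y. D y \<in> insert b A \<and> D y \<le> b} = {y. D y \<in> insert b A}"
    using insert.hyps by fastforce
  have e4: "{y. D y \<in> insert b A \<and> D y < b} = {y. D y \<in> A}"
    using insert.hyps by fastforce
  have "(\<Sum>c\<in>insert b A. \<phi> (\<Sum>y\<in>{y. D y \<in> insert b A \<and> D y \<le> c}. Q y) - \<phi> (\<Sum>y\<in>{y. D y \<in> insert b A \<and> D y < c}. Q y))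
     = (\<phi> (\<Sum>y\<in>{y. D y \<in> insert b A}. Q y) - \<phi> (\<Sum>y\<in>{y. D y \<in> A}. Q y))
       + (\<Sum>c\<in>A. \<phi> (\<Sum>y\<in>{y. D y \<in> A \<and> D y \<le> c}. Q y) - \<phi> (\<Sum>y\<in>{y. D y \<in> A \<and> D y < c}. Q y))"
    using bA insert.hyps(1) e1 e2 e3 e4 by (simp add: sum.insert)
  then show ?case using insert.IH by simp
qed


lemma dp_nonneg: "is_dist Q \<Longrightarrow> dist_prob Q A \<ge> 0"
  unfolding is_dist_def dist_prob_def by (simp add: sum_nonneg)

lemma Q_le_b: fixes d :: "'x \<Rightarrow> 'y::finite \<Rightarrow> real" shows "is_dist Q \<Longrightarrow> Q y \<le> dist_prob Q {y'. d x y' = d x y}"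
  unfolding is_dist_def dist_prob_def by (intro member_le_sum) auto

lemma F_split: fixes d :: "'x \<Rightarrow> 'y::finite \<Rightarrow> real" shows "dist_prob Q {y'. d x y' \<le> c} = dist_prob Q {y'. d x y' < c} + dist_prob Q {y'. d x y' = c}"
proof -
  have "{y'. d x y' \<le> c} = {y'. d x y' < c} \<union> {y'. d x y' = c}" by auto
  moreover have "sum Q ({y'. d x y' < c} \<union> {y'. d x y' = c}) = sum Q {y'. d x y' < c} + sum Q {y'. d x y' = c}"
    by (rule sum.union_disjoint) auto
  ultimately show ?thesis unfolding dist_prob_def by simp
qed

lemma m_eq: fixes d :: "'x \<Rightarrow> 'y::finite \<Rightarrow> real"
  assumes "is_dist Q"
  shows "measure lborel {u\<in>{0..1}. p_c d Q x y u \<le> z} =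
    (let a = dist_prob Q {y'. d x y' < d x y}; b = dist_prob Q {y'. d x y' = d x y} in
    (if b = 0 then (if a \<le> z then 1 else 0) else min 1 (max 0 ((z-a)/b))))"
  unfolding p_c_def Let_def using meas_set dp_nonneg[OF assms] by simp

lemma m_bounds: fixes d :: "'x \<Rightarrow> 'y::finite \<Rightarrow> real"
  assumes "is_dist Q"
  shows "0 \<le> measure lborel {u\<in>{0..1}. p_c d Q x y u \<le> z}"
    "measure lborel {u\<in>{0..1}. p_c d Q x y u \<le> z} \<le> 1"
  unfolding m_eq[OF assms] Let_def by auto


lemma sum_m:
  fixes d :: "'x \<Rightarrow> 'y::finite \<Rightarrow> real" and Q :: "'y \<Rightarrow> real"
  assumes Q: "is_dist Q" and z: "0 < z" "z \<le> 1"
  shows "(\<Sum>y\<in>UNIV. Q y * measure lborel {u\<in>{0..1}. p_c d Q x y u \<le> z}) = z"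
proof -
  define F where "F c = dist_prob Q {y'. d x y' \<le> c}" for c
  define G where "G c = dist_prob Q {y'. d x y' < c}" for c
  define B where "B c = dist_prob Q {y'. d x y' = c}" for c
  define h where "h c = (if B c = 0 then 0 else (min z (F c) - min z (G c)) / B c)" for c
  have FGB: "F c = G c + B c" for c unfolding F_def G_def B_def by (rule F_split)
  have step1: "Q y * measure lborel {u\<in>{0..1}. p_c d Q x y u \<le> z} = Q y * h (d x y)" for y
  proof (cases "B (d x y) = 0")
    case True
    then have "Q y = 0" using Q_le_b[OF Q, of y d x] Q unfolding B_def is_dist_def
      by (metis order_antisym)
    then show ?thesis by simp
  next
    case False
    then have bp: "B (d x y) > 0" using dp_nonneg[OF Q] unfolding B_def
      by (metis order_le_less)
    have "measure lborel {u\<in>{0..1}. p_c d Q x y u \<le> z} = min 1 (max 0 ((z - G (d x y)) / B (d x y)))"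
      unfolding m_eq[OF Q] Let_def using False unfolding B_def G_def by simp
    also have "\<dots> = (min z (F (d x y)) - min z (G (d x y))) / B (d x y)"
      using bm[OF bp, of z "G (d x y)"] bp FGB[of "d x y"]
      by (simp add: field_simps add.commute)
    finally show ?thesis unfolding h_def using False by simp
  qed
  have "(\<Sum>y\<in>UNIV. Q y * measure lborel {u\<in>{0..1}. p_c d Q x y u \<le> z})
      = (\<Sum>y\<in>UNIV. Q y * h (d x y))" by (rule sum.cong[OF refl step1])
  also have "\<dots> = (\<Sum>c\<in>range (d x). (\<Sum>y\<in>{y\<in>UNIV. d x y = c}. Q y * h (d x y)))"
    by (rule sum.image_gen) simp
  also have "\<dots> = (\<Sum>c\<in>range (d x). B c * h c)"
  proof (rule sum.cong)
    fix c assume "c \<in> range (d x)"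
    have "(\<Sum>y\<in>{y\<in>UNIV. d x y = c}. Q y * h (d x y)) = (\<Sum>y\<in>{y\<in>UNIV. d x y = c}. Q y * h c)"
      by (rule sum.cong) auto
    also have "\<dots> = B c * h c" unfolding B_def dist_prob_def by (simp add: sum_distrib_right)
    finally show "(\<Sum>y\<in>{y\<in>UNIV. d x y = c}. Q y * h (d x y)) = B c * h c" .
  qed simp
  also have "\<dots> = (\<Sum>c\<in>range (d x). min z (F c) - min z (G c))"
  proof (rule sum.cong)
    fix c
    show "B c * h c = min z (F c) - min z (G c)"
      using FGB[of c] unfolding h_def by auto
  qed simp
  also have "\<dots> = min z (\<Sum>y\<in>{y. d x y \<in> range (d x)}. Q y) - min z 0"
    using tele[of "range (d x)" "min z" Q "d x"] unfolding F_def G_def dist_prob_def by simp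
  also have "\<dots> = z" using Q z unfolding is_dist_def by simp
  finally show ?thesis .
qed


lemma opt:
  fixes d :: "'x \<Rightarrow> 'y::finite \<Rightarrow> real" and Q v :: "'y \<Rightarrow> real"
  assumes Q: "is_dist Q" and z: "0 < z" "z \<le> 1"
    and v: "\<And>y. 0 \<le> v y" "\<And>y. v y \<le> Q y" and vs: "(\<Sum>y\<in>UNIV. v y) = z"
  shows "(\<Sum>y\<in>UNIV. Q y * measure lborel {u\<in>{0..1}. p_c d Q x y u \<le> z} * d x y)
      \<le> (\<Sum>y\<in>UNIV. v y * d x y)"
proof -
  define m where "m y = measure lborel {u\<in>{0..1}. p_c d Q x y u \<le> z}" for y
  define F where "F c = dist_prob Q {y'. d x y' \<le> c}" for c
  define G where "G c = dist_prob Q {y'. d x y' < c}" for c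
  define B where "B c = dist_prob Q {y'. d x y' = c}" for c
  have FGB: "F c = G c + B c" for c unfolding F_def G_def B_def by (rule F_split)
  have Qnn: "Q y \<ge> 0" for y using Q unfolding is_dist_def by simp
  define K where "K = {c \<in> range (d x). z \<le> F c}"
  have finK: "finite K" unfolding K_def by simp
  obtain y0 where y0: "d x y0 = Max (range (d x))"
  proof -
    have "Max (range (d x)) \<in> range (d x)" by (rule Max_in) auto
    then show ?thesis using that by (metis imageE)
  qed
  have "F (d x y0) = 1"
  proof -
    have "{y'. d x y' \<le> d x y0} = UNIV" using y0 by auto
    then show ?thesis using Q unfolding F_def dist_prob_def is_dist_def by simp
  qed
  then have "d x y0 \<in> K" using z unfolding K_def by simp
  then have Kne: "K \<noteq> {}" by auto
  define cs where "cs = Min K"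
  have csK: "cs \<in> K" unfolding cs_def using finK Kne by simp
  have Fcs: "z \<le> F cs" using csK unfolding K_def by simp
  have trm: "(Q y * m y - v y) * (d x y - cs) \<le> 0" for y
  proof -
    consider "d x y < cs" | "d x y = cs" | "d x y > cs" by linarith
    then show ?thesis
    proof cases
      case 1
      have "\<not> z \<le> F (d x y)"
      proof
        assume "z \<le> F (d x y)"
        then have "d x y \<in> K" unfolding K_def by simp
        then have "cs \<le> d x y" unfolding cs_def using finK by simp
        then show False using 1 by simp
      qed
      then have le: "G (d x y) + B (d x y) \<le> z" using FGB by simp
      have "m y = 1"
      proof (cases "B (d x y) = 0")
        case True
        then show ?thesis unfolding m_def m_eq[OF Q] Let_def using le unfolding B_def G_def by simp
      next
        case False
        then have bp: "B (d x y) > 0" using dp_nonneg[OF Q] unfolding B_def by (metis order_le_less)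
        have "(z - G (d x y)) / B (d x y) \<ge> 1" using bp le by (simp add: le_divide_eq)
        then show ?thesis unfolding m_def m_eq[OF Q] Let_def using False unfolding B_def G_def by simp
      qed
      then have "Q y * m y - v y \<ge> 0" using v by simp
      then show ?thesis using 1 by (simp add: mult_nonneg_nonpos)
    next
      case 2 then show ?thesis by simp
    next
      case 3
      show ?thesis
      proof (cases "Q y = 0")
        case True
        then have "v y = 0" using v[of y] by (metis order_antisym)
        then show ?thesis using True by simp
      next
        case False
        then have bp: "B (d x y) > 0" using Q_le_b[OF Q, of y d x] Qnn[of y] unfolding B_def by linarith
        have "F cs \<le> G (d x y)" unfolding F_def G_def dist_prob_def
          by (rule sum_mono2) (use 3 Qnn in auto)
        then have "(z - G (d x y)) / B (d x y) \<le> 0" using Fcs bp by (simp add: divide_nonpos_pos)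
        then have "m y = 0"
          unfolding m_def m_eq[OF Q] Let_def using bp unfolding B_def G_def by simp
        then show ?thesis using 3 v[of y] by (simp add: mult_nonpos_nonneg)
      qed
    qed
  qed
  have "(\<Sum>y\<in>UNIV. (Q y * m y - v y) * (d x y - cs)) \<le> 0"
    using trm by (simp add: sum_nonpos)
  moreover have "(\<Sum>y\<in>UNIV. (Q y * m y - v y) * (d x y - cs))
     = (\<Sum>y\<in>UNIV. Q y * m y * d x y) - (\<Sum>y\<in>UNIV. v y * d x y) - cs * ((\<Sum>y\<in>UNIV. Q y * m y) - (\<Sum>y\<in>UNIV. v y))"
  proof -
    have "(\<Sum>y\<in>UNIV. (Q y * m y - v y) * (d x y - cs)) = (\<Sum>y\<in>UNIV. (Q y * m y * d x y - v y * d x y) - cs * (Q y * m y - v y))"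
      by (rule sum.cong) (auto simp: algebra_simps)
    also have "\<dots> = (\<Sum>y\<in>UNIV. Q y * m y * d x y - v y * d x y) - cs * (\<Sum>y\<in>UNIV. Q y * m y - v y)"
      using sum_distrib_left[of cs "\<lambda>y. Q y * m y - v y" UNIV]
        sum_subtractf[of "\<lambda>y. Q y * m y * d x y - v y * d x y" "\<lambda>y. cs * (Q y * m y - v y)" UNIV]
      by simp
    also have "\<dots> = (\<Sum>y\<in>UNIV. Q y * m y * d x y) - (\<Sum>y\<in>UNIV. v y * d x y) - cs * ((\<Sum>y\<in>UNIV. Q y * m y) - (\<Sum>y\<in>UNIV. v y))"
      by (simp add: sum_subtractf sum_distrib_left)
    finally show ?thesis .
  qed
  moreover have "(\<Sum>y\<in>UNIV. Q y * m y) = z" unfolding m_def using sum_m[OF Q z] .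
  ultimately show ?thesis using vs unfolding m_def by simp
qed


theorem corollary3:
  fixes P :: "'x::finite \<Rightarrow> real" and d :: "'x \<Rightarrow> 'y::finite \<Rightarrow> real" and z :: real
  assumes "is_dist P"
    and "\<And>x y. d x y \<ge> 0"
    and "0 < z" and "z \<le> 1"
  shows "\<forall>Q1 Q2 t. is_dist Q1 \<longrightarrow> is_dist Q2 \<longrightarrow> 0 \<le> t \<longrightarrow> t \<le> 1 \<longrightarrow>
           Dtilde P d z (\<lambda>y. t * Q1 y + (1 - t) * Q2 y)
             \<le> t * Dtilde P d z Q1 + (1 - t) * Dtilde P d z Q2"
proof (intro allI impI)
  fix Q1 Q2 :: "'y \<Rightarrow> real" and t :: real
  assume Q1: "is_dist Q1" and Q2: "is_dist Q2" and t0: "0 \<le> t" and t1: "t \<le> 1"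
  define M where "M = (\<lambda>y. t * Q1 y + (1 - t) * Q2 y)"
  have QM: "is_dist M"
    using Q1 Q2 t0 t1 unfolding is_dist_def M_def
    by (simp add: sum.distrib sum_distrib_left[symmetric])
  define S where "S Q x = (\<Sum>y\<in>UNIV. Q y * measure lborel {u\<in>{0..1}. p_c d Q x y u \<le> z} * d x y)" for Q x
  have Dt: "Dtilde P d z Q = inverse z * (\<Sum>x\<in>UNIV. P x * S Q x)" for Q
    unfolding Dtilde_def S_def
    by (simp add: sum_distrib_left mult_ac)
  define m where "m Q y x = measure lborel {u\<in>{0..1}. p_c d Q x y u \<le> z}" for Q y x
  have per: "S M x \<le> t * S Q1 x + (1 - t) * S Q2 x" for x
  proof -
    define v where "v y = t * (Q1 y * m Q1 y x) + (1 - t) * (Q2 y * m Q2 y x)" for y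
    have Q1n: "Q1 y \<ge> 0" "Q2 y \<ge> 0" for y using Q1 Q2 unfolding is_dist_def by auto
    have mb1: "0 \<le> m Q1 y x" "m Q1 y x \<le> 1" "0 \<le> m Q2 y x" "m Q2 y x \<le> 1" for y
      unfolding m_def using m_bounds[OF Q1] m_bounds[OF Q2] by auto
    have v0: "0 \<le> v y" for y unfolding v_def using Q1n mb1 t0 t1 by simp
    have v1: "v y \<le> M y" for y
    proof -
      have "Q1 y * m Q1 y x \<le> Q1 y" using Q1n mb1 by (simp add: mult_left_le)
      moreover have "Q2 y * m Q2 y x \<le> Q2 y" using Q1n mb1 by (simp add: mult_left_le)
      ultimately show ?thesis unfolding v_def M_def using t0 t1
        by (simp add: add_mono mult_left_mono)
    qed
    have "(\<Sum>y\<in>UNIV. v y) = t * (\<Sum>y\<in>UNIV. Q1 y * m Q1 y x) + (1 - t) * (\<Sum>y\<in>UNIV. Q2 y * m Q2 y x)"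
      unfolding v_def by (simp add: sum.distrib sum_distrib_left)
    then have vs: "(\<Sum>y\<in>UNIV. v y) = z"
      using sum_m[OF Q1 assms(3,4), of d x] sum_m[OF Q2 assms(3,4), of d x]
      unfolding m_def by (simp add: algebra_simps)
    have "S M x \<le> (\<Sum>y\<in>UNIV. v y * d x y)"
      unfolding S_def by (rule opt[OF QM assms(3,4) v0 v1 vs])
    also have "\<dots> = (\<Sum>y\<in>UNIV. t * (Q1 y * m Q1 y x * d x y) + (1 - t) * (Q2 y * m Q2 y x * d x y))"
      unfolding v_def by (rule sum.cong) (auto simp: algebra_simps)
    also have "\<dots> = t * S Q1 x + (1 - t) * S Q2 x"
      unfolding S_def m_def by (simp add: sum.distrib sum_distrib_left)
    finally show ?thesis .
  qed
  have Pn: "P x \<ge> 0" for x using assms(1) unfolding is_dist_def by auto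
  have "(\<Sum>x\<in>UNIV. P x * S M x) \<le> (\<Sum>x\<in>UNIV. P x * (t * S Q1 x + (1 - t) * S Q2 x))"
    by (rule sum_mono) (use per Pn in \<open>simp add: mult_left_mono\<close>)
  also have "\<dots> = (\<Sum>x\<in>UNIV. t * (P x * S Q1 x) + (1 - t) * (P x * S Q2 x))"
    by (rule sum.cong) (auto simp: algebra_simps)
  also have "\<dots> = t * (\<Sum>x\<in>UNIV. P x * S Q1 x) + (1 - t) * (\<Sum>x\<in>UNIV. P x * S Q2 x)"
    by (simp add: sum.distrib sum_distrib_left)
  finally have "inverse z * (\<Sum>x\<in>UNIV. P x * S M x) \<le> inverse z * (t * (\<Sum>x\<in>UNIV. P x * S Q1 x) + (1 - t) * (\<Sum>x\<in>UNIV. P x * S Q2 x))"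
    using assms(3) by (simp add: mult_left_mono)
  then show "Dtilde P d z M \<le> t * Dtilde P d z Q1 + (1 - t) * Dtilde P d z Q2"
    unfolding Dt by (simp add: algebra_simps)
qed

end
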